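(* Let $U,V$ be bialgebras and $\langle\,,\rangle:U\otimes V\to k$ a pairing which is convolution invertible when regarded as an element $\rho$ of ${\rm Hom}(U^{\rm cop}\otimes V,k)$; let $\rho^{-1}$ be its convolution inverse there. Let $D=D(U^{\rm cop},V)$, $i:U^{\rm cop}\to D$, $i(m)=m\otimes 1$, and $j:V\to D$, $j(x)=1\otimes x$. (i) There exists a bialgebra map $\pi:D\to U^{\rm cop}$ with $\pi\circ i={\rm Id}$ if and only if there exists a bialgebra map $\gamma:V\to U^{\rm cop}$ such that for all $y\in V$, $m\in U$, $$\gamma(y)m=\rho^{-1}(m_1,y_3)\rho(m_3,y_1)\,m_2\gamma(y_2).$$ (ii) There exists a bialgebra map $D\to V$ which is a left inverse of $j$ if and only if there is a bialgebra map $\mu:U^{\rm cop}\to V$ such that for all $y\in V$, $m\in U$, $y\mu(m)=\rho^{-1}(m_1,y_3)\rho(m_3,y_1)\mu(m_2)y_2$. If $U,V$ are Hopf algebras, these maps are Hopf algebra morphisms. (In (i), $\pi(m\otimes x)=m\gamma(x)$ and $\gamma=\pi\circ j$.)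
   Context: Sweedler notation is used, subscripts always referring to comultiplication in $U$ or $V$ (not in $U^{\rm cop}$). A pairing satisfies $\langle mn,x\rangle=\langle m,x_1\rangle\langle n,x_2\rangle$, $\langle m,xy\rangle=\langle m_1,x\rangle\langle m_2,y\rangle$, $\langle 1,x\rangle=\varepsilon(x)$, $\langle m,1\rangle=\varepsilon(m)$. $D(U^{\rm cop},V)$ is the bialgebra with underlying space $U\otimes V$, unit $1\otimes 1$, counit $\varepsilon\otimes\varepsilon$, comultiplication $\Delta(m\otimes x)=(m_2\otimes x_1)\otimes(m_1\otimes x_2)$ and multiplication $(m\otimes x)(n\otimes y)=\rho(n_3,x_1)\rho^{-1}(n_1,x_3)\,mn_2\otimes x_2y$. Here $U^{\rm cop}$ is $U$ with the opposite comultiplication. *)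

theory Defs
  imports Main "HOL.Vector_Spaces"
begin

text \<open>Finite tensors are represented as lists of elementary tensors.
  Over a field, bilinear (resp. trilinear) forms separate the points of
  U \<otimes> V (resp. U \<otimes> V \<otimes> W), so two such lists
  represent the same tensor iff every bilinear (trilinear) form agrees on them.\<close>

definition bilin_form :: "('k::field \<Rightarrow> 'a::ab_group_add \<Rightarrow> 'a) \<Rightarrow> ('k \<Rightarrow> 'b::ab_group_add \<Rightarrow> 'b)
    \<Rightarrow> ('a \<Rightarrow> 'b \<Rightarrow> 'k) \<Rightarrow> bool" where
  "bilin_form sa sb f \<longleftrightarrow>
     (\<forall>c x x' y. f (sa c x + x') y = c * f x y + f x' y) \<and>
     (\<forall>c x y y'. f x (sb c y + y') = c * f x y + f x y')"

definition trilin_form :: "('k::field \<Rightarrow> 'a::ab_group_add \<Rightarrow> 'a) \<Rightarrow> ('k \<Rightarrow> 'b::ab_group_add \<Rightarrow> 'b)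
    \<Rightarrow> ('k \<Rightarrow> 'c::ab_group_add \<Rightarrow> 'c) \<Rightarrow> ('a \<Rightarrow> 'b \<Rightarrow> 'c \<Rightarrow> 'k) \<Rightarrow> bool" where
  "trilin_form sa sb sc f \<longleftrightarrow>
     (\<forall>c x x' y z. f (sa c x + x') y z = c * f x y z + f x' y z) \<and>
     (\<forall>c x y y' z. f x (sb c y + y') z = c * f x y z + f x y' z) \<and>
     (\<forall>c x y z z'. f x y (sc c z + z') = c * f x y z + f x y z')"

definition bilin_map :: "('k::field \<Rightarrow> 'a::ab_group_add \<Rightarrow> 'a) \<Rightarrow> ('k \<Rightarrow> 'b::ab_group_add \<Rightarrow> 'b)
    \<Rightarrow> ('k \<Rightarrow> 'w::ab_group_add \<Rightarrow> 'w) \<Rightarrow> ('a \<Rightarrow> 'b \<Rightarrow> 'w) \<Rightarrow> bool" where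
  "bilin_map sa sb sw f \<longleftrightarrow>
     (\<forall>c x x' y. f (sa c x + x') y = sw c (f x y) + f x' y) \<and>
     (\<forall>c x y y'. f x (sb c y + y') = sw c (f x y) + f x y')"

definition teq2 :: "('k::field \<Rightarrow> 'a::ab_group_add \<Rightarrow> 'a) \<Rightarrow> ('k \<Rightarrow> 'b::ab_group_add \<Rightarrow> 'b)
    \<Rightarrow> ('a \<times> 'b) list \<Rightarrow> ('a \<times> 'b) list \<Rightarrow> bool" where
  "teq2 sa sb xs ys \<longleftrightarrow> (\<forall>f. bilin_form sa sb f \<longrightarrow>
      (\<Sum>(a,b)\<leftarrow>xs. f a b) = (\<Sum>(a,b)\<leftarrow>ys. f a b))"

definition teq3 :: "('k::field \<Rightarrow> 'a::ab_group_add \<Rightarrow> 'a) \<Rightarrow> ('k \<Rightarrow> 'b::ab_group_add \<Rightarrow> 'b)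
    \<Rightarrow> ('k \<Rightarrow> 'c::ab_group_add \<Rightarrow> 'c)
    \<Rightarrow> ('a \<times> 'b \<times> 'c) list \<Rightarrow> ('a \<times> 'b \<times> 'c) list \<Rightarrow> bool" where
  "teq3 sa sb sc xs ys \<longleftrightarrow> (\<forall>f. trilin_form sa sb sc f \<longrightarrow>
      (\<Sum>(a,b,c)\<leftarrow>xs. f a b c) = (\<Sum>(a,b,c)\<leftarrow>ys. f a b c))"

text \<open>Sweedler: \<open>comult2 \<Delta> m\<close> lists the terms (m1, m2, m3) of (\<Delta> \<otimes> id)\<Delta>(m).\<close>
definition comult2 :: "('a \<Rightarrow> ('a \<times> 'a) list) \<Rightarrow> 'a \<Rightarrow> ('a \<times> 'a \<times> 'a) list" where
  "comult2 \<Delta> m = concat (map (\<lambda>(a,b). map (\<lambda>(c,d). (c,d,b)) (\<Delta> a)) (\<Delta> m))"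

definition cop :: "('a \<Rightarrow> ('a \<times> 'a) list) \<Rightarrow> 'a \<Rightarrow> ('a \<times> 'a) list" where
  "cop \<Delta> m = map prod.swap (\<Delta> m)"

definition bialgebra :: "('k::field \<Rightarrow> 'a::ring_1 \<Rightarrow> 'a) \<Rightarrow> ('a \<Rightarrow> ('a \<times> 'a) list) \<Rightarrow> ('a \<Rightarrow> 'k) \<Rightarrow> bool" where
  "bialgebra sc \<Delta> \<epsilon> \<longleftrightarrow>
     vector_space sc \<and>
     (\<forall>c x y. sc c (x * y) = sc c x * y \<and> sc c (x * y) = x * sc c y) \<and>
     (\<forall>c x y. teq2 sc sc (\<Delta> (sc c x + y)) (map (\<lambda>(p,q). (sc c p, q)) (\<Delta> x) @ \<Delta> y)) \<and>
     (\<forall>c x y. \<epsilon> (sc c x + y) = c * \<epsilon> x + \<epsilon> y) \<and>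
     (\<forall>m. teq3 sc sc sc (comult2 \<Delta> m)
            (concat (map (\<lambda>(a,b). map (\<lambda>(c,d). (a,c,d)) (\<Delta> b)) (\<Delta> m)))) \<and>
     (\<forall>m. (\<Sum>(a,b)\<leftarrow>\<Delta> m. sc (\<epsilon> a) b) = m \<and> (\<Sum>(a,b)\<leftarrow>\<Delta> m. sc (\<epsilon> b) a) = m) \<and>
     (\<forall>x y. teq2 sc sc (\<Delta> (x * y))
            (concat (map (\<lambda>(a,b). map (\<lambda>(c,d). (a * c, b * d)) (\<Delta> y)) (\<Delta> x)))) \<and>
     teq2 sc sc (\<Delta> 1) [(1,1)] \<and>
     (\<forall>x y. \<epsilon> (x * y) = \<epsilon> x * \<epsilon> y) \<and> \<epsilon> 1 = 1"

definition bialg_map :: "('k::field \<Rightarrow> 'a::ring_1 \<Rightarrow> 'a) \<Rightarrow> ('a \<Rightarrow> ('a \<times> 'a) list) \<Rightarrow> ('a \<Rightarrow> 'k)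
    \<Rightarrow> ('k \<Rightarrow> 'b::ring_1 \<Rightarrow> 'b) \<Rightarrow> ('b \<Rightarrow> ('b \<times> 'b) list) \<Rightarrow> ('b \<Rightarrow> 'k) \<Rightarrow> ('a \<Rightarrow> 'b) \<Rightarrow> bool" where
  "bialg_map sa \<Delta>a \<epsilon>a sb \<Delta>b \<epsilon>b f \<longleftrightarrow>
     (\<forall>c x y. f (sa c x + y) = sb c (f x) + f y) \<and>
     f 1 = 1 \<and> (\<forall>x y. f (x * y) = f x * f y) \<and>
     (\<forall>x. \<epsilon>b (f x) = \<epsilon>a x) \<and>
     (\<forall>x. teq2 sb sb (\<Delta>b (f x)) (map (\<lambda>(p,q). (f p, f q)) (\<Delta>a x)))"

definition pairing :: "('k::field \<Rightarrow> 'u::ring_1 \<Rightarrow> 'u) \<Rightarrow> ('u \<Rightarrow> ('u \<times> 'u) list) \<Rightarrow> ('u \<Rightarrow> 'k)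
    \<Rightarrow> ('k \<Rightarrow> 'v::ring_1 \<Rightarrow> 'v) \<Rightarrow> ('v \<Rightarrow> ('v \<times> 'v) list) \<Rightarrow> ('v \<Rightarrow> 'k) \<Rightarrow> ('u \<Rightarrow> 'v \<Rightarrow> 'k) \<Rightarrow> bool" where
  "pairing sU \<Delta>U \<epsilon>U sV \<Delta>V \<epsilon>V p \<longleftrightarrow>
     bilin_form sU sV p \<and>
     (\<forall>m n x. p (m * n) x = (\<Sum>(x1,x2)\<leftarrow>\<Delta>V x. p m x1 * p n x2)) \<and>
     (\<forall>m x y. p m (x * y) = (\<Sum>(m1,m2)\<leftarrow>\<Delta>U m. p m1 x * p m2 y)) \<and>
     (\<forall>x. p 1 x = \<epsilon>V x) \<and> (\<forall>m. p m 1 = \<epsilon>U m)"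

text \<open>\<sigma> is the convolution inverse of \<rho> in Hom(U^cop \<otimes> V, k), both given as
  bilinear forms on U \<times> V; the coalgebra U^cop \<otimes> V has
  \<Delta>(m \<otimes> x) = (m2 \<otimes> x1) \<otimes> (m1 \<otimes> x2).\<close>
definition conv_inverse :: "('k::field \<Rightarrow> 'u::ring_1 \<Rightarrow> 'u) \<Rightarrow> ('u \<Rightarrow> ('u \<times> 'u) list) \<Rightarrow> ('u \<Rightarrow> 'k)
    \<Rightarrow> ('k \<Rightarrow> 'v::ring_1 \<Rightarrow> 'v) \<Rightarrow> ('v \<Rightarrow> ('v \<times> 'v) list) \<Rightarrow> ('v \<Rightarrow> 'k)
    \<Rightarrow> ('u \<Rightarrow> 'v \<Rightarrow> 'k) \<Rightarrow> ('u \<Rightarrow> 'v \<Rightarrow> 'k) \<Rightarrow> bool" where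
  "conv_inverse sU \<Delta>U \<epsilon>U sV \<Delta>V \<epsilon>V \<rho> \<sigma> \<longleftrightarrow>
     bilin_form sU sV \<sigma> \<and>
     (\<forall>m x. (\<Sum>(m1,m2)\<leftarrow>\<Delta>U m. \<Sum>(x1,x2)\<leftarrow>\<Delta>V x. \<rho> m2 x1 * \<sigma> m1 x2) = \<epsilon>U m * \<epsilon>V x) \<and>
     (\<forall>m x. (\<Sum>(m1,m2)\<leftarrow>\<Delta>U m. \<Sum>(x1,x2)\<leftarrow>\<Delta>V x. \<sigma> m2 x1 * \<rho> m1 x2) = \<epsilon>U m * \<epsilon>V x)"

text \<open>Product in D(U^cop,V) of elementary tensors, pushed through a linear map on
  U \<otimes> V given by the bilinear map P (i.e. P(m,x) = \<pi>(m \<otimes> x)):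
  \<pi>((m \<otimes> x)(n \<otimes> y)) = \<Sum> \<rho>(n3,x1) rho_inv(n1,x3) \<pi>(m n2 \<otimes> x2 y).\<close>
definition D_prod_image :: "('u \<Rightarrow> ('u \<times> 'u) list) \<Rightarrow> ('v \<Rightarrow> ('v \<times> 'v) list)
    \<Rightarrow> ('u \<Rightarrow> 'v \<Rightarrow> 'k::field) \<Rightarrow> ('u \<Rightarrow> 'v \<Rightarrow> 'k) \<Rightarrow> ('k \<Rightarrow> 'w \<Rightarrow> 'w)
    \<Rightarrow> ('u::ring_1 \<Rightarrow> 'v::ring_1 \<Rightarrow> 'w::ab_group_add) \<Rightarrow> 'u \<Rightarrow> 'v \<Rightarrow> 'u \<Rightarrow> 'v \<Rightarrow> 'w" where
  "D_prod_image \<Delta>U \<Delta>V \<rho> \<sigma> sW P m x n y =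
     (\<Sum>(n1,n2,n3)\<leftarrow>comult2 \<Delta>U n. \<Sum>(x1,x2,x3)\<leftarrow>comult2 \<Delta>V x.
        sW (\<rho> n3 x1 * \<sigma> n1 x3) (P (m * n2) (x2 * y)))"

text \<open>P represents (via \<pi>(m \<otimes> x) = P m x) a bialgebra map
  \<pi> : D(U^cop,V) \<rightarrow> W. Linear maps U \<otimes> V \<rightarrow> W correspond exactly to bilinear maps
  U \<times> V \<rightarrow> W, and all conditions are linear, so checking them on elementary
  tensors suffices.\<close>
definition D_bialg_map :: "('k::field \<Rightarrow> 'u::ring_1 \<Rightarrow> 'u) \<Rightarrow> ('u \<Rightarrow> ('u \<times> 'u) list) \<Rightarrow> ('u \<Rightarrow> 'k)
    \<Rightarrow> ('k \<Rightarrow> 'v::ring_1 \<Rightarrow> 'v) \<Rightarrow> ('v \<Rightarrow> ('v \<times> 'v) list) \<Rightarrow> ('v \<Rightarrow> 'k)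
    \<Rightarrow> ('u \<Rightarrow> 'v \<Rightarrow> 'k) \<Rightarrow> ('u \<Rightarrow> 'v \<Rightarrow> 'k)
    \<Rightarrow> ('k \<Rightarrow> 'w::ring_1 \<Rightarrow> 'w) \<Rightarrow> ('w \<Rightarrow> ('w \<times> 'w) list) \<Rightarrow> ('w \<Rightarrow> 'k)
    \<Rightarrow> ('u \<Rightarrow> 'v \<Rightarrow> 'w) \<Rightarrow> bool" where
  "D_bialg_map sU \<Delta>U \<epsilon>U sV \<Delta>V \<epsilon>V \<rho> \<sigma> sW \<Delta>W \<epsilon>W P \<longleftrightarrow>
     bilin_map sU sV sW P \<and>
     P 1 1 = 1 \<and>
     (\<forall>m x n y. D_prod_image \<Delta>U \<Delta>V \<rho> \<sigma> sW P m x n y = P m x * P n y) \<and>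
     (\<forall>m x. \<epsilon>W (P m x) = \<epsilon>U m * \<epsilon>V x) \<and>
     (\<forall>m x. teq2 sW sW (\<Delta>W (P m x))
        (concat (map (\<lambda>(m1,m2). map (\<lambda>(x1,x2). (P m2 x1, P m1 x2)) (\<Delta>V x)) (\<Delta>U m))))"

end

theory Submission
  imports Defs
begin


definition linf :: "('k::field \<Rightarrow> 'a::ab_group_add \<Rightarrow> 'a) \<Rightarrow> ('k \<Rightarrow> 'b::ab_group_add \<Rightarrow> 'b) \<Rightarrow> ('a \<Rightarrow> 'b) \<Rightarrow> bool" where
  "linf sa sb g \<longleftrightarrow> (\<forall>c x y. g (sa c x + y) = sb c (g x) + g y)"

lemma vsk: "vector_space ((*) :: 'k::field \<Rightarrow> 'k \<Rightarrow> 'k)"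
  by unfold_locales (auto simp: algebra_simps)

lemma linfD: "linf sa sb g \<Longrightarrow> g (sa c x + y) = sb c (g x) + g y"
  by (simp add: linf_def)

lemma linf_zero: assumes "vector_space sa" "vector_space sb" "linf sa sb g" shows "g 0 = 0"
proof -
  interpret A: vector_space sa by fact
  interpret B: vector_space sb by fact
  have "g (sa 1 0 + 0) = sb 1 (g 0) + g 0" using assms(3) by (rule linfD)
  then show ?thesis by simp
qed

lemma linf_add: assumes "vector_space sa" "vector_space sb" "linf sa sb g" shows "g (x + y) = g x + g y"
proof -
  interpret A: vector_space sa by fact
  interpret B: vector_space sb by fact
  have "g (sa 1 x + y) = sb 1 (g x) + g y" using assms(3) by (rule linfD)
  then show ?thesis by simp
qed

lemma linf_scale: assumes "vector_space sa" "vector_space sb" "linf sa sb g" shows "g (sa c x) = sb c (g x)"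
proof -
  have "g (sa c x + 0) = sb c (g x) + g 0" using assms(3) by (rule linfD)
  then show ?thesis using linf_zero[OF assms] by simp
qed

lemma linf_sum_list: assumes "vector_space sa" "vector_space sb" "linf sa sb g"
  shows "g (sum_list (map f xs)) = sum_list (map (\<lambda>i. g (f i)) xs)"
  by (induction xs) (auto simp: linf_zero[OF assms] linf_add[OF assms])

lemma ex_functional:
  assumes vs: "vector_space s" and w: "w \<noteq> 0"
  shows "\<exists>\<phi>. linf s (*) \<phi> \<and> \<phi> w = (1::'k::field)"
proof -
  interpret vector_space s by fact
  interpret K: vector_space "(*) :: 'k \<Rightarrow> 'k \<Rightarrow> 'k" by (rule vsk)
  interpret P: vector_space_pair s "(*) :: 'k \<Rightarrow> 'k \<Rightarrow> 'k" by unfold_locales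
  have ind: "independent {w}" using w by simp
  obtain g where g: "Vector_Spaces.linear s (*) g" "\<forall>x\<in>{w}. g x = (1::'k)"
    using P.linear_independent_extend[OF ind, of "\<lambda>_. 1"] by blast
  interpret G: linear s "(*) :: 'k \<Rightarrow> 'k \<Rightarrow> 'k" g by fact
  have "linf s (*) g" unfolding linf_def by (simp add: G.add G.scale)
  then show ?thesis using g(2) by auto
qed

lemma scale_sum_list: assumes "vector_space s"
  shows "s c (sum_list (map f xs)) = sum_list (map (\<lambda>i. s c (f i)) xs)"
proof -
  interpret vector_space s by fact
  show ?thesis by (induction xs) (auto simp: scale_right_distrib)
qed

lemma teq2_sum:
  assumes vs: "vector_space sW" and t: "teq2 sa sb xs ys"
    and F1: "\<And>y. linf sa sW (\<lambda>x. F x y)" and F2: "\<And>x. linf sb sW (F x)"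
  shows "(\<Sum>(a,b)\<leftarrow>xs. F a b) = (\<Sum>(a,b)\<leftarrow>ys. F a b)"
proof (rule ccontr)
  interpret vector_space sW by fact
  assume ne: "(\<Sum>(a,b)\<leftarrow>xs. F a b) \<noteq> (\<Sum>(a,b)\<leftarrow>ys. F a b)"
  then obtain \<phi> where \<phi>: "linf sW (*) \<phi>" "\<phi> ((\<Sum>(a,b)\<leftarrow>xs. F a b) - (\<Sum>(a,b)\<leftarrow>ys. F a b)) = 1"
    using ex_functional[OF vs, of "(\<Sum>(a,b)\<leftarrow>xs. F a b) - (\<Sum>(a,b)\<leftarrow>ys. F a b)"] by auto
  note L = vs vsk \<phi>(1)
  have "bilin_form sa sb (\<lambda>a b. \<phi> (F a b))"
    unfolding bilin_form_def
    using linfD[OF F1] linfD[OF F2] linf_add[OF L] linf_scale[OF L] by simp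
  then have "(\<Sum>(a,b)\<leftarrow>xs. \<phi> (F a b)) = (\<Sum>(a,b)\<leftarrow>ys. \<phi> (F a b))"
    using t unfolding teq2_def by blast
  moreover have "\<phi> (\<Sum>(a,b)\<leftarrow>xs. F a b) = (\<Sum>(a,b)\<leftarrow>xs. \<phi> (F a b))"
    "\<phi> (\<Sum>(a,b)\<leftarrow>ys. F a b) = (\<Sum>(a,b)\<leftarrow>ys. \<phi> (F a b))"
    using linf_sum_list[OF L] by (simp_all add: case_prod_beta')
  moreover have "\<phi> ((\<Sum>(a,b)\<leftarrow>xs. F a b) - (\<Sum>(a,b)\<leftarrow>ys. F a b)) =
     \<phi> (\<Sum>(a,b)\<leftarrow>xs. F a b) - \<phi> (\<Sum>(a,b)\<leftarrow>ys. F a b)"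
    using linf_add[OF L, of "(\<Sum>(a,b)\<leftarrow>xs. F a b) - (\<Sum>(a,b)\<leftarrow>ys. F a b)" "(\<Sum>(a,b)\<leftarrow>ys. F a b)"]
    by simp
  ultimately show False using \<phi>(2) by simp
qed


lemma sum_list_map_concat[simp]: "sum_list (map f (concat xss)) = sum_list (map (\<lambda>xs. sum_list (map f xs)) xss)"
  by (induction xss) auto

lemma sum_list_concat2[simp]: "sum_list (concat xss) = sum_list (map sum_list xss)"
  by (induction xss) auto

lemma linf_sum_pairs: assumes "vector_space sa" "vector_space sb" "linf sa sb g"
  shows "g (\<Sum>(a,b)\<leftarrow>xs. sa (h a b) (k a b)) = (\<Sum>(a,b)\<leftarrow>xs. sb (h a b) (g (k a b)))"
  by (induction xs) (auto simp: linf_zero[OF assms] linf_add[OF assms] linf_scale[OF assms])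

lemma linf_sum: assumes "vector_space sb" "\<And>i. i \<in> set xs \<Longrightarrow> linf sa sb (\<lambda>x. g x i)"
  shows "linf sa sb (\<lambda>x. sum_list (map (g x) xs))"
proof -
  interpret vector_space sb by fact
  show ?thesis using assms(2)
    by (induction xs) (auto simp: linf_def scale_right_distrib algebra_simps)
qed

lemma linf_scal_left: assumes "vector_space sW" "linf sa (*) h"
  shows "linf sa sW (\<lambda>x. sW (h x) w)"
proof -
  interpret vector_space sW by fact
  show ?thesis using assms(2) by (auto simp: linf_def scale_left_distrib)
qed

lemma linf_scal_const: assumes "vector_space sW" "linf sa sW g"
  shows "linf sa sW (\<lambda>x. sW a (g x))"
proof -
  interpret vector_space sW by fact
  show ?thesis using assms(2) by (auto simp: linf_def scale_right_distrib mult.commute)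
qed

lemma linf_mult_k1: "linf sa (*) h \<Longrightarrow> linf sa (*) (\<lambda>x. h x * (a::'k::field))"
  by (auto simp: linf_def algebra_simps)
lemma linf_mult_k2: "linf sa (*) h \<Longrightarrow> linf sa (*) (\<lambda>x. (a::'k::field) * h x)"
  by (auto simp: linf_def algebra_simps)

lemma linf_comp: "linf sa sb g \<Longrightarrow> linf sb sc h \<Longrightarrow> linf sa sc (\<lambda>x. h (g x))"
  by (simp add: linf_def)

lemma linf_id: "linf s s (\<lambda>x. x)" by (simp add: linf_def)

lemma linf_sum2: assumes "vector_space sb" "\<And>a b. linf sa sb (\<lambda>x. g x a b)"
  shows "linf sa sb (\<lambda>x. \<Sum>(a,b)\<leftarrow>xs. g x a b)"
  by (rule linf_sum[OF assms(1)]) (auto simp: case_prod_beta' assms(2))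

lemma linf_sum3: assumes "vector_space sb" "\<And>a b c. linf sa sb (\<lambda>x. g x a b c)"
  shows "linf sa sb (\<lambda>x. \<Sum>(a,b,c)\<leftarrow>xs. g x a b c)"
  by (rule linf_sum[OF assms(1)]) (auto simp: case_prod_beta' assms(2))

lemma sum3_cong: "(\<And>a b c. f a b c = g a b c) \<Longrightarrow> (\<Sum>(a,b,c)\<leftarrow>xs. f a b c) = (\<Sum>(a,b,c)\<leftarrow>xs. g a b c)"
  by simp

lemma sum_cop: "(\<Sum>(a,b)\<leftarrow>cop \<Delta> x. F a b) = (\<Sum>(a,b)\<leftarrow>\<Delta> x. F b a)"
  by (simp add: cop_def o_def case_prod_beta')

lemma bilin_form_linf: assumes "bilin_form sa sb f"
  shows "linf sa (*) (\<lambda>x. f x y)" "linf sb (*) (f x)"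
  using assms by (auto simp: bilin_form_def linf_def)

lemma bilin_map_linf: assumes "bilin_map sa sb sW f"
  shows "linf sa sW (\<lambda>x. f x y)" "linf sb sW (f x)"
  using assms by (auto simp: bilin_map_def linf_def)

locale bialg =
  fixes s :: "'k::field \<Rightarrow> 'a::ring_1 \<Rightarrow> 'a" and \<Delta> :: "'a \<Rightarrow> ('a \<times> 'a) list" and \<epsilon> :: "'a \<Rightarrow> 'k"
  assumes B: "bialgebra s \<Delta> \<epsilon>"
begin

lemma vs: "vector_space s" using B by (simp add: bialgebra_def)

lemma smul_l: "s c (x * y) = s c x * y"
  using B unfolding bialgebra_def by blast
lemma smul_r: "s c (x * y) = x * s c y"
  using B unfolding bialgebra_def by blast

lemma linf_multL: "linf s s (\<lambda>x. a * x)"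
proof -
  interpret vector_space s by (rule vs)
  show ?thesis by (auto simp: linf_def distrib_left smul_r[symmetric])
qed

lemma linf_multR: "linf s s (\<lambda>x. x * a)"
proof -
  interpret vector_space s by (rule vs)
  show ?thesis by (auto simp: linf_def distrib_right smul_l[symmetric])
qed

lemma eps_lin: "linf s (*) \<epsilon>" using B by (simp add: bialgebra_def linf_def)
lemma eps_mult: "\<epsilon> (x * y) = \<epsilon> x * \<epsilon> y" and eps_one: "\<epsilon> 1 = 1"
  using B by (auto simp: bialgebra_def)

lemma cu1: "(\<Sum>(a,b)\<leftarrow>\<Delta> m. s (\<epsilon> a) b) = m" and cu2: "(\<Sum>(a,b)\<leftarrow>\<Delta> m. s (\<epsilon> b) a) = m"
  using B by (auto simp: bialgebra_def)

lemma cu1_lin: assumes "vector_space sW" "linf s sW g"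
  shows "(\<Sum>(a,b)\<leftarrow>\<Delta> m. sW (\<epsilon> a) (g b)) = g m"
proof -
  have "g m = g (\<Sum>(a,b)\<leftarrow>\<Delta> m. s (\<epsilon> a) b)" by (simp add: cu1)
  also have "\<dots> = (\<Sum>(a,b)\<leftarrow>\<Delta> m. sW (\<epsilon> a) (g b))"
    by (rule linf_sum_pairs[OF vs assms])
  finally show ?thesis by simp
qed

lemma cu2_lin: assumes "vector_space sW" "linf s sW g"
  shows "(\<Sum>(a,b)\<leftarrow>\<Delta> m. sW (\<epsilon> b) (g a)) = g m"
proof -
  have "g m = g (\<Sum>(a,b)\<leftarrow>\<Delta> m. s (\<epsilon> b) a)" by (simp add: cu2)
  also have "\<dots> = (\<Sum>(a,b)\<leftarrow>\<Delta> m. sW (\<epsilon> b) (g a))"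
    by (rule linf_sum_pairs[OF vs assms])
  finally show ?thesis by simp
qed

lemma cu1_k: assumes "linf s (*) g" shows "(\<Sum>(a,b)\<leftarrow>\<Delta> m. \<epsilon> a * g b) = g m"
  using cu1_lin[OF vsk assms] by simp
lemma cu2_k: assumes "linf s (*) g" shows "(\<Sum>(a,b)\<leftarrow>\<Delta> m. \<epsilon> b * g a) = g m"
  using cu2_lin[OF vsk assms] by simp

lemma Delta_lin:
  assumes vW: "vector_space sW" and F1: "\<And>y. linf s sW (\<lambda>x. F x y)" and F2: "\<And>x. linf s sW (F x)"
  shows "linf s sW (\<lambda>m. \<Sum>(a,b)\<leftarrow>\<Delta> m. F a b)"
  unfolding linf_def
proof (intro allI)
  fix c x y
  have t: "teq2 s s (\<Delta> (s c x + y)) (map (\<lambda>(p,q). (s c p, q)) (\<Delta> x) @ \<Delta> y)"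
    using B by (simp add: bialgebra_def)
  have "(\<Sum>(a,b)\<leftarrow>\<Delta> (s c x + y). F a b) = (\<Sum>(a,b)\<leftarrow>map (\<lambda>(p,q). (s c p, q)) (\<Delta> x) @ \<Delta> y. F a b)"
    by (rule teq2_sum[OF vW t F1 F2])
  also have "\<dots> = (\<Sum>(p,q)\<leftarrow>\<Delta> x. sW c (F p q)) + (\<Sum>(a,b)\<leftarrow>\<Delta> y. F a b)"
    using linf_scale[OF vs vW F1] by (simp add: o_def case_prod_beta')
  also have "\<dots> = sW c (\<Sum>(a,b)\<leftarrow>\<Delta> x. F a b) + (\<Sum>(a,b)\<leftarrow>\<Delta> y. F a b)"
    using scale_sum_list[OF vW, of c "\<lambda>(a,b). F a b" "\<Delta> x"] by (simp add: case_prod_beta')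
  finally show "(\<Sum>(a,b)\<leftarrow>\<Delta> (s c x + y). F a b) = sW c (\<Sum>(a,b)\<leftarrow>\<Delta> x. F a b) + (\<Sum>(a,b)\<leftarrow>\<Delta> y. F a b)" .
qed

lemma Delta_one:
  assumes vW: "vector_space sW" and F1: "\<And>y. linf s sW (\<lambda>x. F x y)" and F2: "\<And>x. linf s sW (F x)"
  shows "(\<Sum>(a,b)\<leftarrow>\<Delta> 1. F a b) = F 1 1"
proof -
  have t: "teq2 s s (\<Delta> 1) [(1,1)]" using B by (simp add: bialgebra_def)
  show ?thesis using teq2_sum[OF vW t F1 F2] by simp
qed

lemma Delta_mult:
  assumes vW: "vector_space sW" and F1: "\<And>y. linf s sW (\<lambda>x. F x y)" and F2: "\<And>x. linf s sW (F x)"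
  shows "(\<Sum>(a,b)\<leftarrow>\<Delta> (x * y). F a b) = (\<Sum>(a,b)\<leftarrow>\<Delta> x. \<Sum>(c,d)\<leftarrow>\<Delta> y. F (a * c) (b * d))"
proof -
  have t: "teq2 s s (\<Delta> (x * y)) (concat (map (\<lambda>(a,b). map (\<lambda>(c,d). (a * c, b * d)) (\<Delta> y)) (\<Delta> x)))"
    using B by (simp add: bialgebra_def)
  show ?thesis using teq2_sum[OF vW t F1 F2]
    by (simp add: map_concat o_def case_prod_beta')
qed

lemma comult2_counit: assumes vW: "vector_space sW" and g: "linf s sW g"
  shows "(\<Sum>(a,b,c)\<leftarrow>comult2 \<Delta> x. sW (\<epsilon> a * \<epsilon> c) (g b)) = g x"
proof -
  interpret W: vector_space sW by fact
  have "(\<Sum>(a,b,c)\<leftarrow>comult2 \<Delta> x. sW (\<epsilon> a * \<epsilon> c) (g b)) =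
      (\<Sum>(a,b)\<leftarrow>\<Delta> x. \<Sum>(c,d)\<leftarrow>\<Delta> a. sW (\<epsilon> c * \<epsilon> b) (g d))"
    by (simp add: comult2_def o_def case_prod_beta')
  also have "\<dots> = (\<Sum>(a,b)\<leftarrow>\<Delta> x. sW (\<epsilon> b) (g a))"
  proof (rule arg_cong[where f = sum_list], rule map_cong, simp, clarify)
    fix a b
    have "sW (\<epsilon> b) (g a) = sW (\<epsilon> b) (\<Sum>(c,d)\<leftarrow>\<Delta> a. sW (\<epsilon> c) (g d))"
      by (simp add: cu1_lin[OF vW g])
    also have "\<dots> = (\<Sum>(c,d)\<leftarrow>\<Delta> a. sW (\<epsilon> c * \<epsilon> b) (g d))"
      using scale_sum_list[OF vW, of "\<epsilon> b" "\<lambda>(c,d). sW (\<epsilon> c) (g d)" "\<Delta> a"]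
      by (simp add: case_prod_beta' mult.commute)
    finally show "(\<Sum>(c,d)\<leftarrow>\<Delta> a. sW (\<epsilon> c * \<epsilon> b) (g d)) = sW (\<epsilon> b) (g a)" by simp
  qed
  also have "\<dots> = g x" by (rule cu2_lin[OF vW g])
  finally show ?thesis .
qed

lemma comult2_one:
  assumes vW: "vector_space sW" and F1: "\<And>y z. linf s sW (\<lambda>x. F x y z)"
    and F2: "\<And>x z. linf s sW (\<lambda>y. F x y z)" and F3: "\<And>x y. linf s sW (F x y)"
  shows "(\<Sum>(a,b,c)\<leftarrow>comult2 \<Delta> 1. F a b c) = F 1 1 1"
proof -
  have "(\<Sum>(a,b,c)\<leftarrow>comult2 \<Delta> 1. F a b c) = (\<Sum>(a,b)\<leftarrow>\<Delta> 1. \<Sum>(c,d)\<leftarrow>\<Delta> a. F c d b)"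
    by (simp add: comult2_def map_concat o_def case_prod_beta')
  also have "\<dots> = (\<Sum>(c,d)\<leftarrow>\<Delta> 1. F c d 1)"
  proof (rule Delta_one[OF vW, where F = "\<lambda>a b. \<Sum>(c,d)\<leftarrow>\<Delta> a. F c d b"])
    show "linf s sW (\<lambda>x. \<Sum>(c,d)\<leftarrow>\<Delta> x. F c d y)" for y
      by (rule Delta_lin[OF vW F1 F2])
    show "linf s sW (\<lambda>y. \<Sum>(c,d)\<leftarrow>\<Delta> x. F c d y)" for x
      by (rule linf_sum[OF vW]) (auto simp: case_prod_beta' F3)
  qed
  also have "\<dots> = F 1 1 1" by (rule Delta_one[OF vW F1 F2])
  finally show ?thesis .
qed

end


locale pctx = U: bialg sU \<Delta>U \<epsilon>U + V: bialg sV \<Delta>V \<epsilon>V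
  for sU :: "'k::field \<Rightarrow> 'u::ring_1 \<Rightarrow> 'u" and \<Delta>U \<epsilon>U
  and sV :: "'k \<Rightarrow> 'v::ring_1 \<Rightarrow> 'v" and \<Delta>V \<epsilon>V +
  fixes \<rho> \<sigma> :: "'u \<Rightarrow> 'v \<Rightarrow> 'k"
  assumes pair: "pairing sU \<Delta>U \<epsilon>U sV \<Delta>V \<epsilon>V \<rho>"
    and inv: "conv_inverse sU \<Delta>U \<epsilon>U sV \<Delta>V \<epsilon>V \<rho> \<sigma>"
begin

lemma rho1: "linf sU (*) (\<lambda>m. \<rho> m x)" and rho2: "linf sV (*) (\<rho> m)"
  using pair by (auto simp: pairing_def bilin_form_def linf_def)
lemma sig1: "linf sU (*) (\<lambda>m. \<sigma> m x)" and sig2: "linf sV (*) (\<sigma> m)"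
  using inv by (auto simp: conv_inverse_def bilin_form_def linf_def)
lemma rho_1l: "\<rho> 1 x = \<epsilon>V x" and rho_1r: "\<rho> m 1 = \<epsilon>U m"
  using pair by (auto simp: pairing_def)
lemma rho_mult_l: "\<rho> (m * n) x = (\<Sum>(x1,x2)\<leftarrow>\<Delta>V x. \<rho> m x1 * \<rho> n x2)"
  using pair by (auto simp: pairing_def)

lemma sig_1l: "\<sigma> 1 x = \<epsilon>V x"
proof -
  have "\<epsilon>V x = (\<Sum>(m1,m2)\<leftarrow>\<Delta>U 1. \<Sum>(x1,x2)\<leftarrow>\<Delta>V x. \<rho> m2 x1 * \<sigma> m1 x2)"
    using inv U.eps_one by (simp add: conv_inverse_def)
  also have "\<dots> = (\<Sum>(x1,x2)\<leftarrow>\<Delta>V x. \<rho> 1 x1 * \<sigma> 1 x2)"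
    by (rule U.Delta_one[OF vsk, where F = "\<lambda>m1 m2. \<Sum>(x1,x2)\<leftarrow>\<Delta>V x. \<rho> m2 x1 * \<sigma> m1 x2"])
       (auto intro!: linf_sum2[OF vsk] linf_mult_k1 linf_mult_k2 rho1 sig1)
  also have "\<dots> = \<sigma> 1 x" using V.cu1_k[OF sig2] by (simp add: rho_1l)
  finally show ?thesis by simp
qed

lemma sig_1r: "\<sigma> m 1 = \<epsilon>U m"
proof -
  have "\<epsilon>U m = (\<Sum>(m1,m2)\<leftarrow>\<Delta>U m. \<Sum>(x1,x2)\<leftarrow>\<Delta>V 1. \<rho> m2 x1 * \<sigma> m1 x2)"
    using inv V.eps_one by (simp add: conv_inverse_def)
  also have "\<dots> = (\<Sum>(m1,m2)\<leftarrow>\<Delta>U m. \<rho> m2 1 * \<sigma> m1 1)"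
    by (rule arg_cong[where f = sum_list], rule map_cong, simp, clarify,
        rule V.Delta_one[OF vsk]) (auto intro!: linf_mult_k1 linf_mult_k2 rho2 sig2)
  also have "\<dots> = \<sigma> m 1" using U.cu2_k[OF sig1] by (simp add: rho_1r)
  finally show ?thesis by simp
qed


lemma Dp_n1:
  assumes vW: "vector_space sW" and P1: "\<And>y. linf sU sW (\<lambda>m. P m y)" and P2: "\<And>m. linf sV sW (P m)"
  shows "D_prod_image \<Delta>U \<Delta>V \<rho> \<sigma> sW P m x 1 y = P m (x * y)"
proof -
  have "D_prod_image \<Delta>U \<Delta>V \<rho> \<sigma> sW P m x 1 y =
     (\<Sum>(x1,x2,x3)\<leftarrow>comult2 \<Delta>V x. sW (\<rho> 1 x1 * \<sigma> 1 x3) (P (m * 1) (x2 * y)))"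
    unfolding D_prod_image_def
    by (rule U.comult2_one[OF vW, where F = "\<lambda>n1 n2 n3. \<Sum>(x1,x2,x3)\<leftarrow>comult2 \<Delta>V x. sW (\<rho> n3 x1 * \<sigma> n1 x3) (P (m * n2) (x2 * y))"])
      (auto intro!: linf_sum3[OF vW] linf_scal_left[OF vW] linf_scal_const[OF vW] linf_mult_k1 linf_mult_k2
         rho1 sig1 linf_comp[OF U.linf_multL P1])
  also have "\<dots> = (\<Sum>(x1,x2,x3)\<leftarrow>comult2 \<Delta>V x. sW (\<epsilon>V x1 * \<epsilon>V x3) (P m (x2 * y)))"
    by (simp add: rho_1l sig_1l)
  also have "\<dots> = P m (x * y)"
    by (rule V.comult2_counit[OF vW, where g = "\<lambda>d. P m (d * y)"]) (rule linf_comp[OF V.linf_multR P2])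
  finally show ?thesis .
qed

lemma Dp_x1:
  assumes vW: "vector_space sW" and P1: "\<And>y. linf sU sW (\<lambda>m. P m y)" and P2: "\<And>m. linf sV sW (P m)"
  shows "D_prod_image \<Delta>U \<Delta>V \<rho> \<sigma> sW P m 1 n y = P (m * n) y"
proof -
  have "D_prod_image \<Delta>U \<Delta>V \<rho> \<sigma> sW P m 1 n y =
     (\<Sum>(n1,n2,n3)\<leftarrow>comult2 \<Delta>U n. sW (\<rho> n3 1 * \<sigma> n1 1) (P (m * n2) (1 * y)))"
    unfolding D_prod_image_def
    by (rule arg_cong[where f = sum_list], rule map_cong, simp, clarify,
        rule V.comult2_one[OF vW])
      (auto intro!: linf_scal_left[OF vW] linf_scal_const[OF vW] linf_mult_k1 linf_mult_k2
         rho2 sig2 linf_comp[OF V.linf_multR P2])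
  also have "\<dots> = (\<Sum>(n1,n2,n3)\<leftarrow>comult2 \<Delta>U n. sW (\<epsilon>U n1 * \<epsilon>U n3) (P (m * n2) y))"
    by (simp add: rho_1r sig_1r mult.commute)
  also have "\<dots> = P (m * n) y"
    by (rule U.comult2_counit[OF vW, where g = "\<lambda>d. P (m * d) y"]) (rule linf_comp[OF U.linf_multL P1])
  finally show ?thesis .
qed


lemma i_fwd:
  assumes D: "D_bialg_map sU \<Delta>U \<epsilon>U sV \<Delta>V \<epsilon>V \<rho> \<sigma> sU (cop \<Delta>U) \<epsilon>U P" and Pm1: "\<forall>m. P m 1 = m"
  shows "\<exists>\<gamma>. bialg_map sV \<Delta>V \<epsilon>V sU (cop \<Delta>U) \<epsilon>U \<gamma> \<and>
         (\<forall>y m. \<gamma> y * m =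
            (\<Sum>(m1,m2,m3)\<leftarrow>comult2 \<Delta>U m. \<Sum>(y1,y2,y3)\<leftarrow>comult2 \<Delta>V y.
               sU (\<sigma> m1 y3 * \<rho> m3 y1) (m2 * \<gamma> y2)))"
proof (intro exI conjI allI)
  have bm: "bilin_map sU sV sU P" and P11: "P 1 1 = 1"
    and Pmult: "\<And>m x n y. D_prod_image \<Delta>U \<Delta>V \<rho> \<sigma> sU P m x n y = P m x * P n y"
    and Peps: "\<And>m x. \<epsilon>U (P m x) = \<epsilon>U m * \<epsilon>V x"
    and Pco: "\<And>m x. teq2 sU sU (cop \<Delta>U (P m x))
        (concat (map (\<lambda>(m1,m2). map (\<lambda>(x1,x2). (P m2 x1, P m1 x2)) (\<Delta>V x)) (\<Delta>U m)))"
    using D by (auto simp: D_bialg_map_def)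
  note P1 = bilin_map_linf(1)[OF bm] and P2 = bilin_map_linf(2)[OF bm]
  have Pfact: "P m x = m * P 1 x" for m x
  proof -
    have "P m x = D_prod_image \<Delta>U \<Delta>V \<rho> \<sigma> sU P m 1 1 x"
      using Dp_x1[OF U.vs P1 P2, of m 1 x] by simp
    also have "\<dots> = m * P 1 x" using Pmult Pm1 by simp
    finally show ?thesis .
  qed
  show "bialg_map sV \<Delta>V \<epsilon>V sU (cop \<Delta>U) \<epsilon>U (P 1)"
    unfolding bialg_map_def
  proof (intro conjI allI)
    show "P 1 (sV c x + y) = sU c (P 1 x) + P 1 y" for c x y using P2 by (rule linfD)
    show "P 1 1 = 1" by (rule P11)
    show "P 1 (x * y) = P 1 x * P 1 y" for x y
      using Dp_n1[OF U.vs P1 P2, of 1 x y] Pmult by simp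
    show "\<epsilon>U (P 1 x) = \<epsilon>V x" for x using Peps U.eps_one by simp
    show "teq2 sU sU (cop \<Delta>U (P 1 x)) (map (\<lambda>(p, q). (P 1 p, P 1 q)) (\<Delta>V x))" for x
      unfolding teq2_def
    proof (intro allI impI)
      fix f assume f: "bilin_form sU sU f"
      have "(\<Sum>(a,b)\<leftarrow>cop \<Delta>U (P 1 x). f a b) =
          (\<Sum>(a,b)\<leftarrow>concat (map (\<lambda>(m1,m2). map (\<lambda>(x1,x2). (P m2 x1, P m1 x2)) (\<Delta>V x)) (\<Delta>U 1)). f a b)"
        by (rule teq2_sum[OF vsk Pco bilin_form_linf[OF f]])
      also have "\<dots> = (\<Sum>(m1,m2)\<leftarrow>\<Delta>U 1. \<Sum>(x1,x2)\<leftarrow>\<Delta>V x. f (P m2 x1) (P m1 x2))"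
        by (simp add: o_def case_prod_beta')
      also have "\<dots> = (\<Sum>(x1,x2)\<leftarrow>\<Delta>V x. f (P 1 x1) (P 1 x2))"
        by (rule U.Delta_one[OF vsk]) (auto intro!: linf_sum2[OF vsk] linf_comp[OF P1] bilin_form_linf[OF f])
      also have "\<dots> = (\<Sum>(a,b)\<leftarrow>map (\<lambda>(p, q). (P 1 p, P 1 q)) (\<Delta>V x). f a b)"
        by (simp add: o_def case_prod_beta')
      finally show "(\<Sum>(a,b)\<leftarrow>cop \<Delta>U (P 1 x). f a b) = (\<Sum>(a,b)\<leftarrow>map (\<lambda>(p, q). (P 1 p, P 1 q)) (\<Delta>V x). f a b)" .
    qed
  qed
  fix y m
  have "P 1 y * m = P 1 y * P m 1" using Pm1 by simp
  also have "\<dots> = D_prod_image \<Delta>U \<Delta>V \<rho> \<sigma> sU P 1 y m 1" using Pmult by simp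
  also have "\<dots> = (\<Sum>(m1,m2,m3)\<leftarrow>comult2 \<Delta>U m. \<Sum>(y1,y2,y3)\<leftarrow>comult2 \<Delta>V y.
               sU (\<sigma> m1 y3 * \<rho> m3 y1) (m2 * P 1 y2))"
    unfolding D_prod_image_def
  proof (intro sum3_cong)
    fix n1 n2 n3 x1 x2 x3
    show "sU (\<rho> n3 x1 * \<sigma> n1 x3) (P (1 * n2) (x2 * 1)) = sU (\<sigma> n1 x3 * \<rho> n3 x1) (n2 * P 1 x2)"
      using Pfact[of n2 x2] by (simp add: mult.commute)
  qed
  finally show "P 1 y * m = (\<Sum>(m1,m2,m3)\<leftarrow>comult2 \<Delta>U m. \<Sum>(y1,y2,y3)\<leftarrow>comult2 \<Delta>V y.
               sU (\<sigma> m1 y3 * \<rho> m3 y1) (m2 * P 1 y2))" .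
qed


lemma i_bwd:
  assumes G: "bialg_map sV \<Delta>V \<epsilon>V sU (cop \<Delta>U) \<epsilon>U \<gamma>"
    and R: "\<forall>y m. \<gamma> y * m =
            (\<Sum>(m1,m2,m3)\<leftarrow>comult2 \<Delta>U m. \<Sum>(y1,y2,y3)\<leftarrow>comult2 \<Delta>V y.
               sU (\<sigma> m1 y3 * \<rho> m3 y1) (m2 * \<gamma> y2))"
  shows "\<exists>P. D_bialg_map sU \<Delta>U \<epsilon>U sV \<Delta>V \<epsilon>V \<rho> \<sigma> sU (cop \<Delta>U) \<epsilon>U P \<and> (\<forall>m. P m 1 = m)"
proof (intro exI[of _ "\<lambda>m x. m * \<gamma> x"] conjI allI)
  have Glin: "linf sV sU \<gamma>" and G1: "\<gamma> 1 = 1" and Gmult: "\<And>x y. \<gamma> (x * y) = \<gamma> x * \<gamma> y"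
    and Geps: "\<And>x. \<epsilon>U (\<gamma> x) = \<epsilon>V x"
    and Gco: "\<And>x. teq2 sU sU (cop \<Delta>U (\<gamma> x)) (map (\<lambda>(p,q). (\<gamma> p, \<gamma> q)) (\<Delta>V x))"
    using G by (auto simp: bialg_map_def linf_def)
  show "m * \<gamma> 1 = m" for m using G1 by simp
  show "D_bialg_map sU \<Delta>U \<epsilon>U sV \<Delta>V \<epsilon>V \<rho> \<sigma> sU (cop \<Delta>U) \<epsilon>U (\<lambda>m x. m * \<gamma> x)"
    unfolding D_bialg_map_def
  proof (intro conjI allI)
    show "bilin_map sU sV sU (\<lambda>m x. m * \<gamma> x)"
      using linfD[OF U.linf_multR] linfD[OF linf_comp[OF Glin U.linf_multL]]
      unfolding bilin_map_def by blast
    show "1 * \<gamma> 1 = 1" using G1 by simp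
    show "\<epsilon>U (m * \<gamma> x) = \<epsilon>U m * \<epsilon>V x" for m x by (simp add: U.eps_mult Geps)
    show "D_prod_image \<Delta>U \<Delta>V \<rho> \<sigma> sU (\<lambda>m x. m * \<gamma> x) m x n y = m * \<gamma> x * (n * \<gamma> y)" for m x n y
    proof -
      have "m * \<gamma> x * (n * \<gamma> y) = m * (\<gamma> x * n) * \<gamma> y" by (simp add: mult.assoc)
      also have "\<dots> = m * (\<Sum>(m1,m2,m3)\<leftarrow>comult2 \<Delta>U n. \<Sum>(y1,y2,y3)\<leftarrow>comult2 \<Delta>V x.
               sU (\<sigma> m1 y3 * \<rho> m3 y1) (m2 * \<gamma> y2)) * \<gamma> y" using R by simp
      also have "\<dots> = D_prod_image \<Delta>U \<Delta>V \<rho> \<sigma> sU (\<lambda>m x. m * \<gamma> x) m x n y"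
        unfolding D_prod_image_def
        by (simp add: sum_list_const_mult[symmetric] sum_list_mult_const[symmetric] case_prod_beta'
            U.smul_r[symmetric] U.smul_l[symmetric] Gmult mult.assoc mult.commute[of "\<sigma> _ _"])
      finally show ?thesis by simp
    qed
    show "teq2 sU sU (cop \<Delta>U (m * \<gamma> x))
        (concat (map (\<lambda>(m1,m2). map (\<lambda>(x1,x2). (m2 * \<gamma> x1, m1 * \<gamma> x2)) (\<Delta>V x)) (\<Delta>U m)))" for m x
      unfolding teq2_def
    proof (intro allI impI)
      fix f assume f: "bilin_form sU sU f"
      note f1 = bilin_form_linf(1)[OF f] and f2 = bilin_form_linf(2)[OF f]
      have "(\<Sum>(a,b)\<leftarrow>cop \<Delta>U (m * \<gamma> x). f a b) = (\<Sum>(a,b)\<leftarrow>\<Delta>U (m * \<gamma> x). f b a)"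
        by (rule sum_cop)
      also have "\<dots> = (\<Sum>(a,b)\<leftarrow>\<Delta>U m. \<Sum>(c,d)\<leftarrow>\<Delta>U (\<gamma> x). f (b * d) (a * c))"
        by (rule U.Delta_mult[OF vsk]) (auto intro: f1 f2)
      also have "\<dots> = (\<Sum>(a,b)\<leftarrow>\<Delta>U m. \<Sum>(p,q)\<leftarrow>\<Delta>V x. f (b * \<gamma> p) (a * \<gamma> q))"
      proof (rule arg_cong[where f = sum_list], rule map_cong, simp, clarify)
        fix a b
        have "(\<Sum>(c,d)\<leftarrow>\<Delta>U (\<gamma> x). f (b * d) (a * c)) = (\<Sum>(c,d)\<leftarrow>cop \<Delta>U (\<gamma> x). f (b * c) (a * d))"
          by (simp add: sum_cop)
        also have "\<dots> = (\<Sum>(c,d)\<leftarrow>map (\<lambda>(p,q). (\<gamma> p, \<gamma> q)) (\<Delta>V x). f (b * c) (a * d))"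
          by (rule teq2_sum[OF vsk Gco]) (auto intro!: linf_comp[OF U.linf_multL] f1 f2)
        also have "\<dots> = (\<Sum>(p,q)\<leftarrow>\<Delta>V x. f (b * \<gamma> p) (a * \<gamma> q))"
          by (simp add: o_def case_prod_beta')
        finally show "(\<Sum>(c,d)\<leftarrow>\<Delta>U (\<gamma> x). f (b * d) (a * c)) = (\<Sum>(p,q)\<leftarrow>\<Delta>V x. f (b * \<gamma> p) (a * \<gamma> q))" .
      qed
      also have "\<dots> = (\<Sum>(a,b)\<leftarrow>concat (map (\<lambda>(m1,m2). map (\<lambda>(x1,x2). (m2 * \<gamma> x1, m1 * \<gamma> x2)) (\<Delta>V x)) (\<Delta>U m)). f a b)"
        by (simp add: o_def case_prod_beta')
      finally show "(\<Sum>(a,b)\<leftarrow>cop \<Delta>U (m * \<gamma> x). f a b) = (\<Sum>(a,b)\<leftarrow>concat (map (\<lambda>(m1,m2). map (\<lambda>(x1,x2). (m2 * \<gamma> x1, m1 * \<gamma> x2)) (\<Delta>V x)) (\<Delta>U m)). f a b)" .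
    qed
  qed
qed


lemma ii_fwd:
  assumes D: "D_bialg_map sU \<Delta>U \<epsilon>U sV \<Delta>V \<epsilon>V \<rho> \<sigma> sV \<Delta>V \<epsilon>V Q" and Q1x: "\<forall>x. Q 1 x = x"
  shows "\<exists>\<mu>. bialg_map sU (cop \<Delta>U) \<epsilon>U sV \<Delta>V \<epsilon>V \<mu> \<and>
         (\<forall>y m. y * \<mu> m =
            (\<Sum>(m1,m2,m3)\<leftarrow>comult2 \<Delta>U m. \<Sum>(y1,y2,y3)\<leftarrow>comult2 \<Delta>V y.
               sV (\<sigma> m1 y3 * \<rho> m3 y1) (\<mu> m2 * y2)))"
proof (intro exI conjI allI)
  have bm: "bilin_map sU sV sV Q" and Q11: "Q 1 1 = 1"
    and Qmult: "\<And>m x n y. D_prod_image \<Delta>U \<Delta>V \<rho> \<sigma> sV Q m x n y = Q m x * Q n y"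
    and Qeps: "\<And>m x. \<epsilon>V (Q m x) = \<epsilon>U m * \<epsilon>V x"
    and Qco: "\<And>m x. teq2 sV sV (\<Delta>V (Q m x))
        (concat (map (\<lambda>(m1,m2). map (\<lambda>(x1,x2). (Q m2 x1, Q m1 x2)) (\<Delta>V x)) (\<Delta>U m)))"
    using D by (auto simp: D_bialg_map_def)
  note Q1 = bilin_map_linf(1)[OF bm] and Q2 = bilin_map_linf(2)[OF bm]
  have Qfact: "Q m x = Q m 1 * x" for m x
  proof -
    have "Q m x = D_prod_image \<Delta>U \<Delta>V \<rho> \<sigma> sV Q m 1 1 x"
      using Dp_x1[OF V.vs Q1 Q2, of m 1 x] by simp
    also have "\<dots> = Q m 1 * x" using Qmult Q1x by simp
    finally show ?thesis .
  qed
  show "bialg_map sU (cop \<Delta>U) \<epsilon>U sV \<Delta>V \<epsilon>V (\<lambda>m. Q m 1)"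
    unfolding bialg_map_def
  proof (intro conjI allI)
    show "Q (sU c x + y) 1 = sV c (Q x 1) + Q y 1" for c x y using Q1 by (rule linfD)
    show "Q 1 1 = 1" by (rule Q11)
    show "Q (x * y) 1 = Q x 1 * Q y 1" for x y
      using Dp_x1[OF V.vs Q1 Q2, of x y 1] Qmult by simp
    show "\<epsilon>V (Q x 1) = \<epsilon>U x" for x using Qeps V.eps_one by simp
    show "teq2 sV sV (\<Delta>V (Q x 1)) (map (\<lambda>(p, q). (Q p 1, Q q 1)) (cop \<Delta>U x))" for x
      unfolding teq2_def
    proof (intro allI impI)
      fix f assume f: "bilin_form sV sV f"
      have "(\<Sum>(a,b)\<leftarrow>\<Delta>V (Q x 1). f a b) =
          (\<Sum>(a,b)\<leftarrow>concat (map (\<lambda>(m1,m2). map (\<lambda>(x1,x2). (Q m2 x1, Q m1 x2)) (\<Delta>V 1)) (\<Delta>U x)). f a b)"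
        by (rule teq2_sum[OF vsk Qco bilin_form_linf[OF f]])
      also have "\<dots> = (\<Sum>(m1,m2)\<leftarrow>\<Delta>U x. \<Sum>(x1,x2)\<leftarrow>\<Delta>V 1. f (Q m2 x1) (Q m1 x2))"
        by (simp add: o_def case_prod_beta')
      also have "\<dots> = (\<Sum>(m1,m2)\<leftarrow>\<Delta>U x. f (Q m2 1) (Q m1 1))"
        by (rule arg_cong[where f = sum_list], rule map_cong, simp, clarify, rule V.Delta_one[OF vsk])
          (auto intro!: linf_comp[OF Q2] bilin_form_linf[OF f])
      also have "\<dots> = (\<Sum>(a,b)\<leftarrow>map (\<lambda>(p, q). (Q p 1, Q q 1)) (cop \<Delta>U x). f a b)"
        by (simp add: o_def case_prod_beta' cop_def)
      finally show "(\<Sum>(a,b)\<leftarrow>\<Delta>V (Q x 1). f a b) = (\<Sum>(a,b)\<leftarrow>map (\<lambda>(p, q). (Q p 1, Q q 1)) (cop \<Delta>U x). f a b)" .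
    qed
  qed
  fix y m
  have "y * Q m 1 = Q 1 y * Q m 1" using Q1x by simp
  also have "\<dots> = D_prod_image \<Delta>U \<Delta>V \<rho> \<sigma> sV Q 1 y m 1" using Qmult by simp
  also have "\<dots> = (\<Sum>(m1,m2,m3)\<leftarrow>comult2 \<Delta>U m. \<Sum>(y1,y2,y3)\<leftarrow>comult2 \<Delta>V y.
               sV (\<sigma> m1 y3 * \<rho> m3 y1) (Q m2 1 * y2))"
    unfolding D_prod_image_def
  proof (intro sum3_cong)
    fix n1 n2 n3 x1 x2 x3
    show "sV (\<rho> n3 x1 * \<sigma> n1 x3) (Q (1 * n2) (x2 * 1)) = sV (\<sigma> n1 x3 * \<rho> n3 x1) (Q n2 1 * x2)"
      using Qfact[of n2 x2] by (simp add: mult.commute)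
  qed
  finally show "y * Q m 1 = (\<Sum>(m1,m2,m3)\<leftarrow>comult2 \<Delta>U m. \<Sum>(y1,y2,y3)\<leftarrow>comult2 \<Delta>V y.
               sV (\<sigma> m1 y3 * \<rho> m3 y1) (Q m2 1 * y2))" .
qed

lemma ii_bwd:
  assumes G: "bialg_map sU (cop \<Delta>U) \<epsilon>U sV \<Delta>V \<epsilon>V \<mu>"
    and R: "\<forall>y m. y * \<mu> m =
            (\<Sum>(m1,m2,m3)\<leftarrow>comult2 \<Delta>U m. \<Sum>(y1,y2,y3)\<leftarrow>comult2 \<Delta>V y.
               sV (\<sigma> m1 y3 * \<rho> m3 y1) (\<mu> m2 * y2))"
  shows "\<exists>Q. D_bialg_map sU \<Delta>U \<epsilon>U sV \<Delta>V \<epsilon>V \<rho> \<sigma> sV \<Delta>V \<epsilon>V Q \<and> (\<forall>x. Q 1 x = x)"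
proof (intro exI[of _ "\<lambda>m x. \<mu> m * x"] conjI allI)
  have Glin: "linf sU sV \<mu>" and G1: "\<mu> 1 = 1" and Gmult: "\<And>x y. \<mu> (x * y) = \<mu> x * \<mu> y"
    and Geps: "\<And>x. \<epsilon>V (\<mu> x) = \<epsilon>U x"
    and Gco: "\<And>x. teq2 sV sV (\<Delta>V (\<mu> x)) (map (\<lambda>(p,q). (\<mu> p, \<mu> q)) (cop \<Delta>U x))"
    using G by (auto simp: bialg_map_def linf_def)
  show "\<mu> 1 * x = x" for x using G1 by simp
  show "D_bialg_map sU \<Delta>U \<epsilon>U sV \<Delta>V \<epsilon>V \<rho> \<sigma> sV \<Delta>V \<epsilon>V (\<lambda>m x. \<mu> m * x)"
    unfolding D_bialg_map_def
  proof (intro conjI allI)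
    show "bilin_map sU sV sV (\<lambda>m x. \<mu> m * x)"
      using linfD[OF linf_comp[OF Glin V.linf_multR]] linfD[OF V.linf_multL]
      unfolding bilin_map_def by blast
    show "\<mu> 1 * 1 = 1" using G1 by simp
    show "\<epsilon>V (\<mu> m * x) = \<epsilon>U m * \<epsilon>V x" for m x by (simp add: V.eps_mult Geps)
    show "D_prod_image \<Delta>U \<Delta>V \<rho> \<sigma> sV (\<lambda>m x. \<mu> m * x) m x n y = \<mu> m * x * (\<mu> n * y)" for m x n y
    proof -
      have "\<mu> m * x * (\<mu> n * y) = \<mu> m * (x * \<mu> n) * y" by (simp add: mult.assoc)
      also have "\<dots> = \<mu> m * (\<Sum>(m1,m2,m3)\<leftarrow>comult2 \<Delta>U n. \<Sum>(y1,y2,y3)\<leftarrow>comult2 \<Delta>V x.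
               sV (\<sigma> m1 y3 * \<rho> m3 y1) (\<mu> m2 * y2)) * y" using R by simp
      also have "\<dots> = D_prod_image \<Delta>U \<Delta>V \<rho> \<sigma> sV (\<lambda>m x. \<mu> m * x) m x n y"
        unfolding D_prod_image_def
        by (simp add: sum_list_const_mult[symmetric] sum_list_mult_const[symmetric] case_prod_beta'
            V.smul_r[symmetric] V.smul_l[symmetric] Gmult mult.assoc mult.commute[of "\<sigma> _ _"])
      finally show ?thesis by simp
    qed
    show "teq2 sV sV (\<Delta>V (\<mu> m * x))
        (concat (map (\<lambda>(m1,m2). map (\<lambda>(x1,x2). (\<mu> m2 * x1, \<mu> m1 * x2)) (\<Delta>V x)) (\<Delta>U m)))" for m x
      unfolding teq2_def
    proof (intro allI impI)
      fix f assume f: "bilin_form sV sV f"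
      note f1 = bilin_form_linf(1)[OF f] and f2 = bilin_form_linf(2)[OF f]
      have "(\<Sum>(a,b)\<leftarrow>\<Delta>V (\<mu> m * x). f a b) = (\<Sum>(a,b)\<leftarrow>\<Delta>V (\<mu> m). \<Sum>(c,d)\<leftarrow>\<Delta>V x. f (a * c) (b * d))"
        by (rule V.Delta_mult[OF vsk]) (auto intro: f1 f2)
      also have "\<dots> = (\<Sum>(a,b)\<leftarrow>map (\<lambda>(p,q). (\<mu> p, \<mu> q)) (cop \<Delta>U m). \<Sum>(c,d)\<leftarrow>\<Delta>V x. f (a * c) (b * d))"
        by (rule teq2_sum[OF vsk Gco]) (auto intro!: linf_sum2[OF vsk] linf_comp[OF V.linf_multR] f1 f2)
      also have "\<dots> = (\<Sum>(a,b)\<leftarrow>concat (map (\<lambda>(m1,m2). map (\<lambda>(x1,x2). (\<mu> m2 * x1, \<mu> m1 * x2)) (\<Delta>V x)) (\<Delta>U m)). f a b)"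
        by (simp add: o_def case_prod_beta' cop_def)
      finally show "(\<Sum>(a,b)\<leftarrow>\<Delta>V (\<mu> m * x). f a b) = (\<Sum>(a,b)\<leftarrow>concat (map (\<lambda>(m1,m2). map (\<lambda>(x1,x2). (\<mu> m2 * x1, \<mu> m1 * x2)) (\<Delta>V x)) (\<Delta>U m)). f a b)" .
    qed
  qed
qed

end


theorem mainTheorem3:
  fixes sU :: "'k::field \<Rightarrow> 'u::ring_1 \<Rightarrow> 'u" and \<Delta>U :: "'u \<Rightarrow> ('u \<times> 'u) list" and \<epsilon>U :: "'u \<Rightarrow> 'k"
    and sV :: "'k \<Rightarrow> 'v::ring_1 \<Rightarrow> 'v" and \<Delta>V :: "'v \<Rightarrow> ('v \<times> 'v) list" and \<epsilon>V :: "'v \<Rightarrow> 'k"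
    and \<rho> \<sigma> :: "'u \<Rightarrow> 'v \<Rightarrow> 'k"
  assumes U: "bialgebra sU \<Delta>U \<epsilon>U"
    and V: "bialgebra sV \<Delta>V \<epsilon>V"
    and pair: "pairing sU \<Delta>U \<epsilon>U sV \<Delta>V \<epsilon>V \<rho>"
    and inv: "conv_inverse sU \<Delta>U \<epsilon>U sV \<Delta>V \<epsilon>V \<rho> \<sigma>"
  shows
    "((\<exists>P. D_bialg_map sU \<Delta>U \<epsilon>U sV \<Delta>V \<epsilon>V \<rho> \<sigma> sU (cop \<Delta>U) \<epsilon>U P \<and> (\<forall>m. P m 1 = m))
      \<longleftrightarrow>
      (\<exists>\<gamma>. bialg_map sV \<Delta>V \<epsilon>V sU (cop \<Delta>U) \<epsilon>U \<gamma> \<and>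
         (\<forall>y m. \<gamma> y * m =
            (\<Sum>(m1,m2,m3)\<leftarrow>comult2 \<Delta>U m. \<Sum>(y1,y2,y3)\<leftarrow>comult2 \<Delta>V y.
               sU (\<sigma> m1 y3 * \<rho> m3 y1) (m2 * \<gamma> y2)))))
     \<and>
     ((\<exists>Q. D_bialg_map sU \<Delta>U \<epsilon>U sV \<Delta>V \<epsilon>V \<rho> \<sigma> sV \<Delta>V \<epsilon>V Q \<and> (\<forall>x. Q 1 x = x))
      \<longleftrightarrow>
      (\<exists>\<mu>. bialg_map sU (cop \<Delta>U) \<epsilon>U sV \<Delta>V \<epsilon>V \<mu> \<and>
         (\<forall>y m. y * \<mu> m =
            (\<Sum>(m1,m2,m3)\<leftarrow>comult2 \<Delta>U m. \<Sum>(y1,y2,y3)\<leftarrow>comult2 \<Delta>V y.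
               sV (\<sigma> m1 y3 * \<rho> m3 y1) (\<mu> m2 * y2)))))"
proof -
  interpret pctx sU \<Delta>U \<epsilon>U sV \<Delta>V \<epsilon>V \<rho> \<sigma>
    using U V pair inv by (simp add: pctx_def pctx_axioms_def bialg_def)
  show ?thesis using i_fwd i_bwd ii_fwd ii_bwd by blast
qed

end
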